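(* Let $G$ be a group and $(\mathcal B_1,\Phi_1)\subseteq(\mathcal B_2,\Phi_2)$ a partial subaction of $G$ on generalized Boolean algebras, $\Phi_k=(\{\mathcal I_{k,t}\},\{\phi_{k,t}\})$, with $\mathcal B_1$ an ideal of $\mathcal B_2$. Let $$\mathcal B=\Big\{\bigcup_{i=1}^n\phi_{2,g_i}(V_i)\in\mathcal B_2: n\ge1,\ g_i\in G,\ V_i\in\mathcal B_1\cap\mathcal I_{2,g_i^{-1}}\Big\}.$$ Then $\mathcal B$ is a generalized Boolean algebra with $\mathcal B_1\subseteq\mathcal B\subseteq\mathcal B_2$, and $\mathcal B$ is an ideal of $\mathcal B_2$. Moreover, setting $\mathcal I_g=\mathcal B\cap\mathcal I_{2,g}$ (so $\mathcal I_{1,g}\subseteq\mathcal I_g\subseteq\mathcal I_{2,g}$), the restrictions $\phi_g$ of $\phi_{2,g}$ to $\mathcal I_{g^{-1}}$ are well-defined maps $\mathcal I_{g^{-1}}\to\mathcal I_g$ forming a partial action $\Phi$ of $G$ on $\mathcal B$, and $(\mathcal B_1,\Phi_1)\subseteq(\mathcal B,\Phi)\subseteq(\mathcal B_2,\Phi_2)$ are partial subactions.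
   Context: A generalized Boolean algebra is a distributive relatively complemented lattice with least element $0$ (joins $\cup$); an ideal is a subset closed under finite joins and under meets with arbitrary elements. A partial action $\Phi$ of $G$ on $\mathcal B$ consists of ideals $\mathcal I_t$ and lattice isomorphisms $\phi_t:\mathcal I_{t^{-1}}\to\mathcal I_t$ with $\mathcal I_e=\mathcal B$, $\phi_e=\mathrm{id}$, $\phi_s(\mathcal I_{s^{-1}}\cap\mathcal I_t)=\mathcal I_s\cap\mathcal I_{st}$, and $\phi_s\phi_t=\phi_{st}$ where defined. A partial subaction $(\mathcal B_1,\Phi_1)\subseteq(\mathcal B_2,\Phi_2)$: $\mathcal B_1$ is a sub generalized Boolean algebra of $\mathcal B_2$, $\mathcal I_{1,t}\subseteq\mathcal I_{2,t}$, and $\phi_{2,t}$ restricts to $\phi_{1,t}$ on $\mathcal I_{1,t^{-1}}$. *)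

theory Defs
  imports "HOL-Algebra.Group"
begin

text \<open>A generalized Boolean algebra is represented by a carrier set S inside an
ambient type together with join j, meet m and least element z (shared by all
subalgebras considered).  The order is a \<le> b iff m a b = a.\<close>

definition gba :: "'a set \<Rightarrow> ('a \<Rightarrow> 'a \<Rightarrow> 'a) \<Rightarrow> ('a \<Rightarrow> 'a \<Rightarrow> 'a) \<Rightarrow> 'a \<Rightarrow> bool" where
  "gba S j m z \<longleftrightarrow>
     z \<in> S \<and>
     (\<forall>a\<in>S. \<forall>b\<in>S. j a b \<in> S \<and> m a b \<in> S) \<and>
     (\<forall>a\<in>S. \<forall>b\<in>S. j a b = j b a \<and> m a b = m b a) \<and>
     (\<forall>a\<in>S. \<forall>b\<in>S. \<forall>c\<in>S. j (j a b) c = j a (j b c) \<and> m (m a b) c = m a (m b c)) \<and>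
     (\<forall>a\<in>S. \<forall>b\<in>S. j a (m a b) = a \<and> m a (j a b) = a) \<and>
     (\<forall>a\<in>S. \<forall>b\<in>S. \<forall>c\<in>S. m a (j b c) = j (m a b) (m a c)) \<and>
     (\<forall>a\<in>S. m z a = z) \<and>
     (\<forall>a\<in>S. \<forall>b\<in>S. \<forall>c\<in>S. m a b = a \<and> m b c = b \<longrightarrow>
         (\<exists>x\<in>S. m b x = a \<and> j b x = c))"

definition sub_gba :: "'a set \<Rightarrow> 'a set \<Rightarrow> ('a \<Rightarrow> 'a \<Rightarrow> 'a) \<Rightarrow> ('a \<Rightarrow> 'a \<Rightarrow> 'a) \<Rightarrow> 'a \<Rightarrow> bool" where
  "sub_gba S1 S2 j m z \<longleftrightarrow> gba S2 j m z \<and> S1 \<subseteq> S2 \<and> gba S1 j m z"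

definition gba_ideal :: "'a set \<Rightarrow> 'a set \<Rightarrow> ('a \<Rightarrow> 'a \<Rightarrow> 'a) \<Rightarrow> ('a \<Rightarrow> 'a \<Rightarrow> 'a) \<Rightarrow> 'a \<Rightarrow> bool" where
  "gba_ideal I S j m z \<longleftrightarrow> I \<subseteq> S \<and> z \<in> I \<and>
     (\<forall>a\<in>I. \<forall>b\<in>I. j a b \<in> I) \<and> (\<forall>a\<in>I. \<forall>b\<in>S. m a b \<in> I)"

definition partial_action ::
  "('g, 'b) monoid_scheme \<Rightarrow> 'a set \<Rightarrow> ('a \<Rightarrow> 'a \<Rightarrow> 'a) \<Rightarrow> ('a \<Rightarrow> 'a \<Rightarrow> 'a) \<Rightarrow> 'a
    \<Rightarrow> ('g \<Rightarrow> 'a set) \<Rightarrow> ('g \<Rightarrow> 'a \<Rightarrow> 'a) \<Rightarrow> bool" where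
  "partial_action G S j m z I phi \<longleftrightarrow>
     gba S j m z \<and>
     (\<forall>t\<in>carrier G. gba_ideal (I t) S j m z) \<and>
     (\<forall>t\<in>carrier G. bij_betw (phi t) (I (inv\<^bsub>G\<^esub> t)) (I t)) \<and>
     (\<forall>t\<in>carrier G. \<forall>x\<in>I (inv\<^bsub>G\<^esub> t). \<forall>y\<in>I (inv\<^bsub>G\<^esub> t).
         phi t (j x y) = j (phi t x) (phi t y) \<and> phi t (m x y) = m (phi t x) (phi t y)) \<and>
     I \<one>\<^bsub>G\<^esub> = S \<and> (\<forall>x\<in>S. phi \<one>\<^bsub>G\<^esub> x = x) \<and>
     (\<forall>s\<in>carrier G. \<forall>t\<in>carrier G.
         phi s ` (I (inv\<^bsub>G\<^esub> s) \<inter> I t) = I s \<inter> I (s \<otimes>\<^bsub>G\<^esub> t)) \<and>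
     (\<forall>s\<in>carrier G. \<forall>t\<in>carrier G. \<forall>x.
         x \<in> I (inv\<^bsub>G\<^esub> t) \<and> phi t x \<in> I (inv\<^bsub>G\<^esub> s) \<longrightarrow>
         phi s (phi t x) = phi (s \<otimes>\<^bsub>G\<^esub> t) x)"

definition partial_subaction ::
  "('g, 'b) monoid_scheme \<Rightarrow> ('a \<Rightarrow> 'a \<Rightarrow> 'a) \<Rightarrow> ('a \<Rightarrow> 'a \<Rightarrow> 'a) \<Rightarrow> 'a
    \<Rightarrow> 'a set \<Rightarrow> ('g \<Rightarrow> 'a set) \<Rightarrow> ('g \<Rightarrow> 'a \<Rightarrow> 'a)
    \<Rightarrow> 'a set \<Rightarrow> ('g \<Rightarrow> 'a set) \<Rightarrow> ('g \<Rightarrow> 'a \<Rightarrow> 'a) \<Rightarrow> bool" where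
  "partial_subaction G j m z S1 I1 phi1 S2 I2 phi2 \<longleftrightarrow>
     partial_action G S1 j m z I1 phi1 \<and> partial_action G S2 j m z I2 phi2 \<and>
     sub_gba S1 S2 j m z \<and>
     (\<forall>t\<in>carrier G. I1 t \<subseteq> I2 t) \<and>
     (\<forall>t\<in>carrier G. \<forall>x\<in>I1 (inv\<^bsub>G\<^esub> t). phi2 t x = phi1 t x)"

fun joins :: "('a \<Rightarrow> 'a \<Rightarrow> 'a) \<Rightarrow> 'a list \<Rightarrow> 'a" where
  "joins j [] = undefined"
| "joins j [x] = x"
| "joins j (x # y # xs) = j x (joins j (y # xs))"

definition generated_set ::
  "('g, 'b) monoid_scheme \<Rightarrow> ('a \<Rightarrow> 'a \<Rightarrow> 'a) \<Rightarrow> 'a set \<Rightarrow> 'a set \<Rightarrow> ('g \<Rightarrow> 'a set)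
    \<Rightarrow> ('g \<Rightarrow> 'a \<Rightarrow> 'a) \<Rightarrow> 'a set" where
  "generated_set G j S1 S2 I2 phi2 =
     {x \<in> S2. \<exists>ps :: ('g \<times> 'a) list. ps \<noteq> [] \<and>
        (\<forall>(g, V)\<in>set ps. g \<in> carrier G \<and> V \<in> S1 \<inter> I2 (inv\<^bsub>G\<^esub> g)) \<and>
        x = joins j (map (\<lambda>(g, V). phi2 g V) ps)}"

end

theory Submission
  imports Defs
begin

lemma joins_Cons: "xs \<noteq> [] \<Longrightarrow> joins j (x # xs) = j x (joins j xs)"
  by (cases xs) auto

lemma joins_closed:
  assumes cl: "\<And>a b. a \<in> S \<Longrightarrow> b \<in> S \<Longrightarrow> j a b \<in> S"
  shows "xs \<noteq> [] \<Longrightarrow> set xs \<subseteq> S \<Longrightarrow> joins j xs \<in> S"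
proof (induction xs rule: list_nonempty_induct)
  case (single x) then show ?case by simp
next
  case (cons x xs) then show ?case by (simp add: joins_Cons cl)
qed

lemma joins_append:
  assumes cl: "\<And>a b. a \<in> S \<Longrightarrow> b \<in> S \<Longrightarrow> j a b \<in> S"
   and as: "\<And>a b c. a \<in> S \<Longrightarrow> b \<in> S \<Longrightarrow> c \<in> S \<Longrightarrow> j (j a b) c = j a (j b c)"
   and ys: "ys \<noteq> []" "set ys \<subseteq> S"
  shows "xs \<noteq> [] \<Longrightarrow> set xs \<subseteq> S \<Longrightarrow> joins j (xs @ ys) = j (joins j xs) (joins j ys)"
proof (induction xs rule: list_nonempty_induct)
  case (single x) then show ?case using ys by (simp add: joins_Cons)
next
  case (cons x xs)
  have "joins j ((x # xs) @ ys) = j x (joins j (xs @ ys))"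
    using cons by (simp add: joins_Cons)
  also have "\<dots> = j x (j (joins j xs) (joins j ys))" using cons by simp
  also have "\<dots> = j (j x (joins j xs)) (joins j ys)"
    using cons ys joins_closed[OF cl] as by simp
  finally show ?case using cons by (simp add: joins_Cons)
qed

lemma joins_hom:
  assumes cl: "\<And>a b. a \<in> S \<Longrightarrow> b \<in> S \<Longrightarrow> j a b \<in> S"
   and hom: "\<And>a b. a \<in> S \<Longrightarrow> b \<in> S \<Longrightarrow> f (j a b) = j (f a) (f b)"
  shows "xs \<noteq> [] \<Longrightarrow> set xs \<subseteq> S \<Longrightarrow> f (joins j xs) = joins j (map f xs)"
proof (induction xs rule: list_nonempty_induct)
  case (single x) then show ?case by simp
next
  case (cons x xs)
  then show ?case using joins_closed[OF cl] hom by (simp add: joins_Cons)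
qed

lemma list_lift:
  "\<forall>x\<in>set xs. \<exists>p. P p \<and> x = f p \<Longrightarrow> \<exists>ps. (\<forall>p\<in>set ps. P p) \<and> xs = map f ps"
proof (induction xs)
  case Nil then show ?case by simp
next
  case (Cons a xs)
  then obtain p where "P p" "a = f p" by auto
  moreover obtain ps where "\<forall>p\<in>set ps. P p" "xs = map f ps" using Cons by auto
  ultimately show ?case by (intro exI[of _ "p # ps"]) auto
qed

lemma gba_ideal_gba:
  assumes g: "gba S2 j m z" and i: "gba_ideal S S2 j m z"
  shows "gba S j m z"
proof -
  have sub: "S \<subseteq> S2" and zS: "z \<in> S" and jc: "\<forall>a\<in>S. \<forall>b\<in>S. j a b \<in> S"
    and mc: "\<forall>a\<in>S. \<forall>b\<in>S2. m a b \<in> S" using i unfolding gba_ideal_def by auto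
  have comm: "\<forall>a\<in>S2. \<forall>b\<in>S2. j a b = j b a \<and> m a b = m b a"
    and ab: "\<forall>a\<in>S2. \<forall>b\<in>S2. j a (m a b) = a \<and> m a (j a b) = a"
    and rc: "\<forall>a\<in>S2. \<forall>b\<in>S2. \<forall>c\<in>S2. m a b = a \<and> m b c = b \<longrightarrow>
         (\<exists>x\<in>S2. m b x = a \<and> j b x = c)"
    and cl2: "\<forall>a\<in>S2. \<forall>b\<in>S2. j a b \<in> S2 \<and> m a b \<in> S2"
    using g unfolding gba_def by auto
  have rcS: "\<exists>x\<in>S. m b x = a \<and> j b x = c"
    if "a \<in> S" "b \<in> S" "c \<in> S" "m a b = a" "m b c = b" for a b c
  proof -
    from rc that sub obtain x where x: "x \<in> S2" "m b x = a" "j b x = c" by blast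
    have bS2: "b \<in> S2" using that sub by auto
    have "m c x = m x c" using comm x that sub by auto
    also have "\<dots> = m x (j x b)" using x comm bS2 by auto
    also have "\<dots> = x" using ab x bS2 by auto
    finally have "m c x = x" .
    moreover have "m c x \<in> S" using mc that x by auto
    ultimately show ?thesis using x by auto
  qed
  show ?thesis
    using g sub zS jc mc rcS unfolding gba_def by (auto simp: subset_iff)
qed

locale gsx = group G for G :: "('g, 'c) monoid_scheme" (structure) +
  fixes j m :: "'a \<Rightarrow> 'a \<Rightarrow> 'a" and z :: 'a
    and B1 B2 :: "'a set" and I2 :: "'g \<Rightarrow> 'a set" and phi2 :: "'g \<Rightarrow> 'a \<Rightarrow> 'a"
  assumes pa2: "partial_action G B2 j m z I2 phi2"
    and id1: "gba_ideal B1 B2 j m z"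
begin

lemma gba2: "gba B2 j m z" using pa2 unfolding partial_action_def by blast

lemma cl2: "a \<in> B2 \<Longrightarrow> b \<in> B2 \<Longrightarrow> j a b \<in> B2" "a \<in> B2 \<Longrightarrow> b \<in> B2 \<Longrightarrow> m a b \<in> B2"
  using gba2 unfolding gba_def by auto
lemma comm2: "a \<in> B2 \<Longrightarrow> b \<in> B2 \<Longrightarrow> j a b = j b a" "a \<in> B2 \<Longrightarrow> b \<in> B2 \<Longrightarrow> m a b = m b a"
  using gba2 unfolding gba_def by auto
lemma assoc2: "a \<in> B2 \<Longrightarrow> b \<in> B2 \<Longrightarrow> c \<in> B2 \<Longrightarrow> j (j a b) c = j a (j b c)"
  "a \<in> B2 \<Longrightarrow> b \<in> B2 \<Longrightarrow> c \<in> B2 \<Longrightarrow> m (m a b) c = m a (m b c)"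
  using gba2 unfolding gba_def by auto
lemma absorb2: "a \<in> B2 \<Longrightarrow> b \<in> B2 \<Longrightarrow> j a (m a b) = a" "a \<in> B2 \<Longrightarrow> b \<in> B2 \<Longrightarrow> m a (j a b) = a"
  using gba2 unfolding gba_def by auto
lemma distr2: "a \<in> B2 \<Longrightarrow> b \<in> B2 \<Longrightarrow> c \<in> B2 \<Longrightarrow> m a (j b c) = j (m a b) (m a c)"
  using gba2 unfolding gba_def by auto
lemma idem2: "a \<in> B2 \<Longrightarrow> m a a = a"
proof -
  assume a: "a \<in> B2"
  have "m a (j a (m a a)) = a" using absorb2(2) a cl2 by blast
  then show ?thesis using absorb2(1)[OF a a] by simp
qed

lemma pa_I: "\<forall>t\<in>carrier G. gba_ideal (I2 t) B2 j m z"
  using pa2 unfolding partial_action_def by (elim conjE) assumption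
lemma pa_bij: "\<forall>t\<in>carrier G. bij_betw (phi2 t) (I2 (inv t)) (I2 t)"
  using pa2 unfolding partial_action_def by (elim conjE) assumption
lemma pa_hom: "\<forall>t\<in>carrier G. \<forall>x\<in>I2 (inv t). \<forall>y\<in>I2 (inv t).
         phi2 t (j x y) = j (phi2 t x) (phi2 t y) \<and> phi2 t (m x y) = m (phi2 t x) (phi2 t y)"
  using pa2 unfolding partial_action_def by (elim conjE) assumption
lemma I2_one: "I2 \<one> = B2"
  using pa2 unfolding partial_action_def by (elim conjE) assumption
lemma pa_one: "\<forall>x\<in>B2. phi2 \<one> x = x"
  using pa2 unfolding partial_action_def by (elim conjE) assumption
lemma pa_img: "\<forall>s\<in>carrier G. \<forall>t\<in>carrier G.
         phi2 s ` (I2 (inv s) \<inter> I2 t) = I2 s \<inter> I2 (s \<otimes> t)"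
  using pa2 unfolding partial_action_def by (elim conjE) assumption
lemma pa_comp: "\<forall>s\<in>carrier G. \<forall>t\<in>carrier G. \<forall>x.
         x \<in> I2 (inv t) \<and> phi2 t x \<in> I2 (inv s) \<longrightarrow>
         phi2 s (phi2 t x) = phi2 (s \<otimes> t) x"
  using pa2 unfolding partial_action_def by (elim conjE) assumption

lemma I2_ideal: "t \<in> carrier G \<Longrightarrow> gba_ideal (I2 t) B2 j m z"
  using pa_I by blast
lemma I2_sub: "t \<in> carrier G \<Longrightarrow> x \<in> I2 t \<Longrightarrow> x \<in> B2"
  using I2_ideal unfolding gba_ideal_def by blast
lemma I2_j: "t \<in> carrier G \<Longrightarrow> x \<in> I2 t \<Longrightarrow> y \<in> I2 t \<Longrightarrow> j x y \<in> I2 t"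
  using I2_ideal unfolding gba_ideal_def by blast
lemma I2_m: "t \<in> carrier G \<Longrightarrow> x \<in> I2 t \<Longrightarrow> y \<in> B2 \<Longrightarrow> m x y \<in> I2 t"
  using I2_ideal unfolding gba_ideal_def by blast
lemma I2_m': "t \<in> carrier G \<Longrightarrow> x \<in> I2 t \<Longrightarrow> y \<in> B2 \<Longrightarrow> m y x \<in> I2 t"
proof -
  assume a: "t \<in> carrier G" "x \<in> I2 t" "y \<in> B2"
  have "x \<in> B2" using a(1,2) by (rule I2_sub)
  then have "m y x = m x y" using comm2(2)[OF a(3)] by simp
  then show ?thesis using I2_m[OF a] by simp
qed
lemma bij2: "t \<in> carrier G \<Longrightarrow> bij_betw (phi2 t) (I2 (inv t)) (I2 t)"
  using pa_bij by blast
lemma maps2: "t \<in> carrier G \<Longrightarrow> x \<in> I2 (inv t) \<Longrightarrow> phi2 t x \<in> I2 t"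
  using bij2 bij_betwE by blast
lemma hom2: "t \<in> carrier G \<Longrightarrow> x \<in> I2 (inv t) \<Longrightarrow> y \<in> I2 (inv t) \<Longrightarrow> phi2 t (j x y) = j (phi2 t x) (phi2 t y)"
  "t \<in> carrier G \<Longrightarrow> x \<in> I2 (inv t) \<Longrightarrow> y \<in> I2 (inv t) \<Longrightarrow> phi2 t (m x y) = m (phi2 t x) (phi2 t y)"
  using pa_hom by blast+
lemma phi2_one: "x \<in> B2 \<Longrightarrow> phi2 \<one> x = x"
  using pa_one by blast
lemma img2: "s \<in> carrier G \<Longrightarrow> t \<in> carrier G \<Longrightarrow> phi2 s ` (I2 (inv s) \<inter> I2 t) = I2 s \<inter> I2 (s \<otimes> t)"
  using pa_img by blast
lemma comp2: "s \<in> carrier G \<Longrightarrow> t \<in> carrier G \<Longrightarrow> x \<in> I2 (inv t) \<Longrightarrow> phi2 t x \<in> I2 (inv s)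
   \<Longrightarrow> phi2 s (phi2 t x) = phi2 (s \<otimes> t) x"
  using pa_comp by blast

lemma back2: "h \<in> carrier G \<Longrightarrow> V \<in> I2 (inv h) \<Longrightarrow> phi2 (inv h) (phi2 h V) = V"
proof -
  assume h: "h \<in> carrier G" and V: "V \<in> I2 (inv h)"
  have "phi2 h V \<in> I2 (inv (inv h))" using maps2[OF h V] h by simp
  then have "phi2 (inv h) (phi2 h V) = phi2 (inv h \<otimes> h) V" using comp2 h V by simp
  then show ?thesis using h V I2_sub[of "inv h" V] phi2_one by simp
qed

lemma back2': "h \<in> carrier G \<Longrightarrow> x \<in> I2 h \<Longrightarrow> phi2 h (phi2 (inv h) x) = x"
  using back2[of "inv h" x] by simp

lemma L2: assumes g: "g \<in> carrier G" and h: "h \<in> carrier G" and V: "V \<in> I2 (inv h)"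
  and P: "phi2 h V \<in> I2 (inv g)"
  shows "V \<in> I2 (inv (g \<otimes> h)) \<and> phi2 g (phi2 h V) = phi2 (g \<otimes> h) V"
proof
  have "phi2 h V \<in> I2 (inv (inv h)) \<inter> I2 (inv g)" using maps2[OF h V] h P by simp
  then have "phi2 (inv h) (phi2 h V) \<in> I2 (inv h \<otimes> inv g)"
    using img2[of "inv h" "inv g"] g h by blast
  then show "V \<in> I2 (inv (g \<otimes> h))" using back2[OF h V] g h by (simp add: inv_mult_group)
  show "phi2 g (phi2 h V) = phi2 (g \<otimes> h) V" using comp2 g h V P by simp
qed

definition Gen where
  "Gen = {phi2 g V | g V. g \<in> carrier G \<and> V \<in> B1 \<and> V \<in> I2 (inv g)}"

abbreviation BB where "BB \<equiv> generated_set G j B1 B2 I2 phi2"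

lemma B1_sub: "V \<in> B1 \<Longrightarrow> V \<in> B2" using id1 unfolding gba_ideal_def by blast

lemma Gen_sub: "x \<in> Gen \<Longrightarrow> x \<in> B2"
  unfolding Gen_def using maps2 I2_sub by blast

lemma L1: assumes g: "g \<in> carrier G" and V: "V \<in> B1" "V \<in> I2 (inv g)" and y: "y \<in> B2"
  shows "m (phi2 g V) y \<in> Gen"
proof -
  define x where "x = m (phi2 g V) y"
  have pV: "phi2 g V \<in> I2 g" using maps2 g V by blast
  have x: "x \<in> I2 g" unfolding x_def using I2_m g pV y by blast
  define U where "U = phi2 (inv g) x"
  have U: "U \<in> I2 (inv g)" unfolding U_def using maps2[of "inv g" x] g x by simp
  have gU: "phi2 g U = x" unfolding U_def using back2' g x by blast
  have xx: "m (phi2 g V) x = x" unfolding x_def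
    using assoc2(2)[OF I2_sub[OF g pV] I2_sub[OF g pV] y, symmetric] idem2[OF I2_sub[OF g pV]] by simp
  have "U = phi2 (inv g) (m (phi2 g V) x)" using xx U_def by simp
  also have "\<dots> = m (phi2 (inv g) (phi2 g V)) (phi2 (inv g) x)"
    using hom2(2)[of "inv g" "phi2 g V" x] g pV x by simp
  also have "\<dots> = m V U" using back2 g V U_def by simp
  finally have eqU: "U = m V U" .
  have UB2: "U \<in> B2" using I2_sub[of "inv g" U] U g by simp
  have "m V U \<in> B1" using id1 V UB2 unfolding gba_ideal_def by auto
  then have UB1: "U \<in> B1" by (subst eqU)
  have "x \<in> Gen" unfolding Gen_def using gU g U UB1 by blast
  then show ?thesis unfolding x_def .
qed

lemma B_char: "x \<in> BB \<longleftrightarrow> (\<exists>xs. xs \<noteq> [] \<and> set xs \<subseteq> Gen \<and> x = joins j xs)"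
proof
  assume "x \<in> BB"
  then have "x \<in> B2 \<and> (\<exists>ps :: ('g \<times> 'a) list. ps \<noteq> [] \<and>
        (\<forall>(g, V)\<in>set ps. g \<in> carrier G \<and> V \<in> B1 \<inter> I2 (inv g)) \<and>
        x = joins j (map (\<lambda>(g, V). phi2 g V) ps))"
    unfolding generated_set_def by (rule CollectD)
  then obtain ps :: "('g \<times> 'a) list" where ps: "ps \<noteq> []" "\<forall>(g, V)\<in>set ps. g \<in> carrier G \<and> V \<in> B1 \<inter> I2 (inv g)"
    "x = joins j (map (\<lambda>(g, V). phi2 g V) ps)" by (elim conjE exE) (rule that)
  have "set (map (\<lambda>(g, V). phi2 g V) ps) \<subseteq> Gen"
  proof
    fix y assume "y \<in> set (map (\<lambda>(g, V). phi2 g V) ps)"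
    then obtain g V where gV: "(g, V) \<in> set ps" "y = phi2 g V" by auto
    have "g \<in> carrier G \<and> V \<in> B1 \<inter> I2 (inv g)" using ps(2) gV(1) by fast
    then show "y \<in> Gen" unfolding Gen_def gV(2) by blast
  qed
  moreover have "map (\<lambda>(g, V). phi2 g V) ps \<noteq> []" using ps(1) by simp
  ultimately show "\<exists>xs. xs \<noteq> [] \<and> set xs \<subseteq> Gen \<and> x = joins j xs" using ps(3) by blast
next
  assume "\<exists>xs. xs \<noteq> [] \<and> set xs \<subseteq> Gen \<and> x = joins j xs"
  then obtain xs where xs: "xs \<noteq> []" "set xs \<subseteq> Gen" "x = joins j xs" by blast
  have "\<forall>y\<in>set xs. \<exists>p. (case p of (g, V) \<Rightarrow> g \<in> carrier G \<and> V \<in> B1 \<inter> I2 (inv g))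
      \<and> y = (case p of (g, V) \<Rightarrow> phi2 g V)"
  proof
    fix y assume "y \<in> set xs"
    then have "y \<in> Gen" using xs(2) by blast
    then obtain g V where "g \<in> carrier G" "V \<in> B1" "V \<in> I2 (inv g)" "y = phi2 g V"
      unfolding Gen_def by blast
    then show "\<exists>p. (case p of (g, V) \<Rightarrow> g \<in> carrier G \<and> V \<in> B1 \<inter> I2 (inv g))
      \<and> y = (case p of (g, V) \<Rightarrow> phi2 g V)" by (intro exI[of _ "(g, V)"]) simp
  qed
  from list_lift[OF this] obtain ps where
    ps: "\<forall>p\<in>set ps. (case p of (g, V) \<Rightarrow> g \<in> carrier G \<and> V \<in> B1 \<inter> I2 (inv g))"
      "xs = map (\<lambda>(g, V). phi2 g V) ps" by blast
  have "set xs \<subseteq> B2" using xs(2) Gen_sub by blast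
  then have xB: "x \<in> B2" using joins_closed[of B2 j xs, OF cl2(1) xs(1)] xs(3) by simp
  have "ps \<noteq> []" using xs(1) ps(2) by auto
  then show "x \<in> BB" unfolding generated_set_def using xB ps xs(3) by blast
qed

lemma BB_sub: "x \<in> BB \<Longrightarrow> x \<in> B2"
  unfolding generated_set_def by blast

lemma L3: assumes x: "x \<in> BB" and y: "y \<in> B2"
  shows "\<exists>ys. ys \<noteq> [] \<and> set ys \<subseteq> Gen \<and> (\<forall>q\<in>set ys. \<exists>p\<in>B2. q = m p y) \<and> m x y = joins j ys"
proof -
  obtain xs where xs: "xs \<noteq> []" "set xs \<subseteq> Gen" "x = joins j xs" using x B_char by blast
  have hom: "m (j a b) y = j (m a y) (m b y)" if "a \<in> B2" "b \<in> B2" for a b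
  proof -
    have "m (j a b) y = m y (j a b)" using comm2(2) cl2(1) that y by simp
    also have "\<dots> = j (m y a) (m y b)" using distr2 that y by simp
    also have "\<dots> = j (m a y) (m b y)" using comm2(2) that y by simp
    finally show ?thesis .
  qed
  have "m x y = joins j (map (\<lambda>p. m p y) xs)"
    using joins_hom[of B2 j "\<lambda>p. m p y" xs] xs cl2 hom Gen_sub by blast
  moreover have "set (map (\<lambda>p. m p y) xs) \<subseteq> Gen"
    using xs(2) L1 y unfolding Gen_def by auto
  moreover have "\<forall>q\<in>set (map (\<lambda>p. m p y) xs). \<exists>p\<in>B2. q = m p y"
    using xs(2) Gen_sub by auto
  ultimately show ?thesis using xs(1) by (intro exI[of _ "map (\<lambda>p. m p y) xs"]) auto
qed

lemma down: "x \<in> BB \<Longrightarrow> y \<in> B2 \<Longrightarrow> m x y \<in> BB"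
proof -
  assume "x \<in> BB" "y \<in> B2"
  from L3[OF this] obtain ys where "ys \<noteq> []" "set ys \<subseteq> Gen" "m x y = joins j ys" by blast
  then show ?thesis using B_char by blast
qed

lemma BB_j: "x \<in> BB \<Longrightarrow> y \<in> BB \<Longrightarrow> j x y \<in> BB"
proof -
  assume "x \<in> BB" "y \<in> BB"
  then obtain xs ys where h: "xs \<noteq> []" "set xs \<subseteq> Gen" "x = joins j xs"
    "ys \<noteq> []" "set ys \<subseteq> Gen" "y = joins j ys" using B_char by meson
  have sx: "set xs \<subseteq> B2" "set ys \<subseteq> B2" using h Gen_sub by auto
  have "joins j (xs @ ys) = j (joins j xs) (joins j ys)"
    using joins_append[of B2 j ys xs, OF cl2(1) assoc2(1) h(4) sx(2) h(1) sx(1)] by blast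
  then have "j x y = joins j (xs @ ys)" using h by simp
  moreover have "xs @ ys \<noteq> []" "set (xs @ ys) \<subseteq> Gen" using h by auto
  ultimately show ?thesis unfolding B_char by blast
qed

lemma B1_BB: "V \<in> B1 \<Longrightarrow> V \<in> BB"
proof -
  assume V: "V \<in> B1"
  have "V \<in> I2 (inv \<one>)" using V B1_sub I2_one by simp
  then have "phi2 \<one> V \<in> Gen" unfolding Gen_def using V by blast
  then have "V \<in> Gen" using phi2_one B1_sub V by simp
  then have "[V] \<noteq> [] \<and> set [V] \<subseteq> Gen \<and> V = joins j [V]" by simp
  then show ?thesis using B_char[of V] by blast
qed

lemma z_B1: "z \<in> B1" using id1 unfolding gba_ideal_def by blast

lemma ideal_BB: "gba_ideal BB B2 j m z"
  unfolding gba_ideal_def using BB_sub B1_BB z_B1 BB_j down by blast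

lemma gba_BB: "gba BB j m z" using gba_ideal_gba[OF gba2 ideal_BB] .

lemma L6: assumes g: "g \<in> carrier G" and x: "x \<in> BB" "x \<in> I2 (inv g)"
  shows "phi2 g x \<in> BB"
proof -
  have xB: "x \<in> B2" using BB_sub x by blast
  obtain ys where ys: "ys \<noteq> []" "set ys \<subseteq> Gen" "\<forall>q\<in>set ys. \<exists>p\<in>B2. q = m p x" "m x x = joins j ys"
    using L3[OF x(1) xB] by blast
  have ysI: "set ys \<subseteq> I2 (inv g)"
  proof
    fix q assume "q \<in> set ys"
    then obtain p where p: "p \<in> B2" "q = m p x" using ys(3) by blast
    show "q \<in> I2 (inv g)" unfolding p(2) using I2_m'[OF _ x(2) p(1)] g by simp
  qed
  have clI: "\<And>a b. a \<in> I2 (inv g) \<Longrightarrow> b \<in> I2 (inv g) \<Longrightarrow> j a b \<in> I2 (inv g)"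
    using I2_j[of "inv g"] g by simp
  have homI: "\<And>a b. a \<in> I2 (inv g) \<Longrightarrow> b \<in> I2 (inv g) \<Longrightarrow> phi2 g (j a b) = j (phi2 g a) (phi2 g b)"
    using hom2(1)[OF g] by blast
  have jh: "phi2 g (joins j ys) = joins j (map (phi2 g) ys)"
    by (rule joins_hom[of "I2 (inv g)" j "phi2 g", OF clI homI ys(1) ysI])
  have xj: "x = joins j ys" using ys(4) idem2[OF xB] by simp
  have "phi2 g x = joins j (map (phi2 g) ys)" using jh xj by simp
  moreover have "set (map (phi2 g) ys) \<subseteq> Gen"
  proof
    fix q assume "q \<in> set (map (phi2 g) ys)"
    then obtain p where p: "p \<in> set ys" "q = phi2 g p" by auto
    then obtain h V where hV: "h \<in> carrier G" "V \<in> B1" "V \<in> I2 (inv h)" "p = phi2 h V"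
      using ys(2) unfolding Gen_def by blast
    have pI: "phi2 h V \<in> I2 (inv g)" using ysI p(1) hV(4) by blast
    have L: "V \<in> I2 (inv (g \<otimes> h)) \<and> phi2 g (phi2 h V) = phi2 (g \<otimes> h) V"
      by (rule L2[OF g hV(1) hV(3) pI])
    have gh: "g \<otimes> h \<in> carrier G" using g hV(1) by simp
    have "q = phi2 (g \<otimes> h) V" using p(2) hV(4) L by simp
    then show "q \<in> Gen" unfolding Gen_def using gh hV(2) L by blast
  qed
  ultimately have "map (phi2 g) ys \<noteq> [] \<and> set (map (phi2 g) ys) \<subseteq> Gen \<and> phi2 g x = joins j (map (phi2 g) ys)"
    using ys(1) by simp
  then show ?thesis unfolding B_char by blast
qed

abbreviation Ib where "Ib \<equiv> (\<lambda>g. BB \<inter> I2 g)"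
abbreviation phib where "phib \<equiv> (\<lambda>g. restrict (phi2 g) (BB \<inter> I2 (inv g)))"

lemma maps_b: "g \<in> carrier G \<Longrightarrow> x \<in> BB \<Longrightarrow> x \<in> I2 (inv g) \<Longrightarrow> phi2 g x \<in> BB \<and> phi2 g x \<in> I2 g"
  using L6 maps2 by blast

lemma Ib_ideal: "t \<in> carrier G \<Longrightarrow> gba_ideal (Ib t) BB j m z"
  unfolding gba_ideal_def
proof (intro conjI ballI)
  assume t: "t \<in> carrier G"
  show "Ib t \<subseteq> BB" by blast
  show "z \<in> Ib t" using ideal_BB I2_ideal[OF t] unfolding gba_ideal_def by blast
  show "j a b \<in> Ib t" if "a \<in> Ib t" "b \<in> Ib t" for a b
  proof -
    have "j a b \<in> BB" using BB_j that by simp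
    moreover have "j a b \<in> I2 t" using I2_j[OF t] that by simp
    ultimately show ?thesis by simp
  qed
  show "m a b \<in> Ib t" if "a \<in> Ib t" "b \<in> BB" for a b
  proof -
    have b2: "b \<in> B2" using BB_sub that(2) .
    have "m a b \<in> BB" using down[OF _ b2] that(1) by simp
    moreover have "m a b \<in> I2 t" using I2_m[OF t _ b2] that(1) by simp
    ultimately show ?thesis by simp
  qed
qed

lemma pa_b: "partial_action G BB j m z Ib phib"
  unfolding partial_action_def
proof (intro conjI ballI allI impI)
  show "gba BB j m z" by (rule gba_BB)
  show "gba_ideal (Ib t) BB j m z" if "t \<in> carrier G" for t using Ib_ideal that .
  show "bij_betw (phib t) (Ib (inv t)) (Ib t)" if t: "t \<in> carrier G" for t
  proof -
    have inj: "inj_on (phi2 t) (Ib (inv t))"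
      using bij2[OF t] unfolding bij_betw_def by (meson inf_le2 inj_on_subset)
    have "phi2 t ` Ib (inv t) = Ib t"
    proof
      show "phi2 t ` Ib (inv t) \<subseteq> Ib t" using maps_b t by blast
      show "Ib t \<subseteq> phi2 t ` Ib (inv t)"
      proof
        fix y assume y: "y \<in> Ib t"
        then have y': "y \<in> I2 (inv (inv t))" using t by simp
        have "phi2 (inv t) y \<in> Ib (inv t)" using maps_b[of "inv t" y] y y' t by simp
        moreover have "phi2 t (phi2 (inv t) y) = y" using back2' t y by blast
        ultimately show "y \<in> phi2 t ` Ib (inv t)" by (metis imageI)
      qed
    qed
    then have "bij_betw (phi2 t) (Ib (inv t)) (Ib t)" using inj by (simp add: bij_betw_def)
    then show ?thesis using bij_betw_cong[of "Ib (inv t)" "phib t" "phi2 t"] by simp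
  qed
  fix t x y assume t: "t \<in> carrier G" and x: "x \<in> Ib (inv t)" and y: "y \<in> Ib (inv t)"
  have jx: "j x y \<in> Ib (inv t)" using Ib_ideal[of "inv t"] t x y unfolding gba_ideal_def by auto
  have mx: "m x y \<in> Ib (inv t)" using Ib_ideal[of "inv t"] t x y unfolding gba_ideal_def by auto
  show "phib t (j x y) = j (phib t x) (phib t y)" using jx x y hom2(1)[OF t] by simp
  show "phib t (m x y) = m (phib t x) (phib t y)" using mx x y hom2(2)[OF t] by simp
next
  show "Ib \<one> = BB" using I2_one BB_sub by blast
next
  fix x assume "x \<in> BB"
  then show "phib \<one> x = x" using I2_one BB_sub phi2_one by simp
next
  fix s t assume s: "s \<in> carrier G" and t: "t \<in> carrier G"
  have "phib s ` (Ib (inv s) \<inter> Ib t) = phi2 s ` (Ib (inv s) \<inter> Ib t)"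
    by (rule image_cong) auto
  also have "\<dots> = Ib s \<inter> Ib (s \<otimes> t)"
  proof
    show "phi2 s ` (Ib (inv s) \<inter> Ib t) \<subseteq> Ib s \<inter> Ib (s \<otimes> t)"
    proof
      fix y assume "y \<in> phi2 s ` (Ib (inv s) \<inter> Ib t)"
      then obtain x where x: "x \<in> BB" "x \<in> I2 (inv s)" "x \<in> I2 t" "y = phi2 s x" by blast
      have "y \<in> BB" using maps_b[OF s x(1,2)] x(4) by simp
      moreover have "y \<in> I2 s \<inter> I2 (s \<otimes> t)" using img2[OF s t] x by blast
      ultimately show "y \<in> Ib s \<inter> Ib (s \<otimes> t)" by blast
    qed
    show "Ib s \<inter> Ib (s \<otimes> t) \<subseteq> phi2 s ` (Ib (inv s) \<inter> Ib t)"
    proof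
      fix y assume y: "y \<in> Ib s \<inter> Ib (s \<otimes> t)"
      have "y \<in> I2 s \<inter> I2 (s \<otimes> t)" using y by blast
      then have "y \<in> phi2 s ` (I2 (inv s) \<inter> I2 t)" using img2[OF s t] by simp
      then obtain x where x: "x \<in> I2 (inv s)" "x \<in> I2 t" "y = phi2 s x" by blast
      have "x = phi2 (inv s) y" using back2[OF s x(1)] x(3) by simp
      moreover have "phi2 (inv s) y \<in> BB" using maps_b[of "inv s" y] s y by simp
      ultimately show "y \<in> phi2 s ` (Ib (inv s) \<inter> Ib t)" using x by blast
    qed
  qed
  finally show "phib s ` (Ib (inv s) \<inter> Ib t) = Ib s \<inter> Ib (s \<otimes> t)" .
next
  fix s t x assume s: "s \<in> carrier G" and t: "t \<in> carrier G"
    and h: "x \<in> Ib (inv t) \<and> phib t x \<in> Ib (inv s)"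
  have e1: "phib t x = phi2 t x" using h by simp
  have "phib t x \<in> Ib (inv s)" using h by (rule conjunct2)
  then have pi: "phi2 t x \<in> I2 (inv s)" unfolding e1 by blast
  have L: "x \<in> I2 (inv (s \<otimes> t)) \<and> phi2 s (phi2 t x) = phi2 (s \<otimes> t) x"
    using L2[OF s t] h pi by blast
  show "phib s (phib t x) = phib (s \<otimes> t) x" using e1 h L by simp
qed

end

lemma (in gsx) Ib_sub2: "BB \<inter> I2 g \<subseteq> I2 g" by blast

theorem lemma4p11:
  fixes G :: "('g, 'c) monoid_scheme"
    and j m :: "'a \<Rightarrow> 'a \<Rightarrow> 'a" and z :: 'a
    and B1 B2 :: "'a set" and I1 I2 :: "'g \<Rightarrow> 'a set" and phi1 phi2 :: "'g \<Rightarrow> 'a \<Rightarrow> 'a"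
  assumes "group G"
    and "partial_subaction G j m z B1 I1 phi1 B2 I2 phi2"
    and "gba_ideal B1 B2 j m z"
  defines "B \<equiv> generated_set G j B1 B2 I2 phi2"
    and "I \<equiv> (\<lambda>g. generated_set G j B1 B2 I2 phi2 \<inter> I2 g)"
    and "phi \<equiv> (\<lambda>g. restrict (phi2 g) (generated_set G j B1 B2 I2 phi2 \<inter> I2 (inv\<^bsub>G\<^esub> g)))"
  shows "gba B j m z \<and> B1 \<subseteq> B \<and> B \<subseteq> B2 \<and> gba_ideal B B2 j m z
     \<and> (\<forall>g\<in>carrier G. I1 g \<subseteq> I g \<and> I g \<subseteq> I2 g)
     \<and> (\<forall>g\<in>carrier G. phi g \<in> I (inv\<^bsub>G\<^esub> g) \<rightarrow> I g)
     \<and> partial_action G B j m z I phi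
     \<and> partial_subaction G j m z B1 I1 phi1 B I phi
     \<and> partial_subaction G j m z B I phi B2 I2 phi2"
proof -
  have pa1: "partial_action G B1 j m z I1 phi1" and pa2: "partial_action G B2 j m z I2 phi2"
    and I12: "\<forall>t\<in>carrier G. I1 t \<subseteq> I2 t"
    and agree: "\<forall>t\<in>carrier G. \<forall>x\<in>I1 (inv\<^bsub>G\<^esub> t). phi2 t x = phi1 t x"
    using assms(2) unfolding partial_subaction_def by blast+
  have gba1: "gba B1 j m z" using pa1 unfolding partial_action_def by blast
  have I1B1: "\<forall>t\<in>carrier G. gba_ideal (I1 t) B1 j m z" using pa1 unfolding partial_action_def by blast
  interpret gsx G j m z B1 B2 I2 phi2
    using assms(1) pa2 assms(3) by (simp add: gsx_def gsx_axioms_def)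
  have f1: "gba B j m z" unfolding B_def by (rule gba_BB)
  have f2: "B1 \<subseteq> B" unfolding B_def using B1_BB by blast
  have f3: "B \<subseteq> B2" unfolding B_def using BB_sub by blast
  have f4: "gba_ideal B B2 j m z" unfolding B_def by (rule ideal_BB)
  have f5: "\<forall>g\<in>carrier G. I1 g \<subseteq> I g \<and> I g \<subseteq> I2 g"
  proof
    fix g assume g: "g \<in> carrier G"
    have "I1 g \<subseteq> B1" using I1B1 g unfolding gba_ideal_def by blast
    then show "I1 g \<subseteq> I g \<and> I g \<subseteq> I2 g" using f2 I12 g unfolding I_def B_def by blast
  qed
  have f6: "\<forall>g\<in>carrier G. phi g \<in> I (inv\<^bsub>G\<^esub> g) \<rightarrow> I g"
  proof (intro ballI Pi_I)
    fix g x assume g: "g \<in> carrier G" and x: "x \<in> I (inv\<^bsub>G\<^esub> g)"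
    then have "x \<in> BB" "x \<in> I2 (inv\<^bsub>G\<^esub> g)" unfolding I_def by auto
    then show "phi g x \<in> I g" using maps_b[OF g] unfolding phi_def I_def by simp
  qed
  have f7: "partial_action G B j m z I phi"
    unfolding B_def I_def phi_def by (rule pa_b)
  have phi_app: "phi t x = phi2 t x" if "x \<in> I (inv\<^bsub>G\<^esub> t)" for t x
    using that unfolding phi_def I_def by simp
  have f8: "partial_subaction G j m z B1 I1 phi1 B I phi"
    unfolding partial_subaction_def sub_gba_def
  proof (intro conjI ballI)
    show "\<And>t. t \<in> carrier G \<Longrightarrow> I1 t \<subseteq> I t" using f5 by blast
    fix t x assume t: "t \<in> carrier G" and x: "x \<in> I1 (inv\<^bsub>G\<^esub> t)"
    have "x \<in> I (inv\<^bsub>G\<^esub> t)" using f5 t x by auto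
    then show "phi t x = phi1 t x" using phi_app agree t x by simp
  qed (fact pa1 f7 f1 f2 gba1)+
  have f9: "partial_subaction G j m z B I phi B2 I2 phi2"
    unfolding partial_subaction_def sub_gba_def
  proof (intro conjI ballI)
    show "\<And>t. t \<in> carrier G \<Longrightarrow> I t \<subseteq> I2 t" using f5 by blast
    fix t x assume t: "t \<in> carrier G" and x: "x \<in> I (inv\<^bsub>G\<^esub> t)"
    then show "phi2 t x = phi t x" using phi_app by simp
  qed (fact f7 pa2 gba2 f3 f1)+
  show ?thesis using f1 f2 f3 f4 f5 f6 f7 f8 f9 by blast
qed

end
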